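(* Let $n\ge 1$ and let $a=(a_1,\dots,a_n)$ be a good sequence of $[n]$. Then: (1) the sequence $b=(b_1,\dots,b_n)$ with $b_i=n+1-a_i$ is a good sequence; (2) if $a_{2l+1}\ge \lceil \frac{n+1}{2}\rceil$ for all $l$ with $2l+1\in[n]$, then the sequence $b$ defined by $b_{2l+1}=a_{2l+1}-\lfloor \frac n2\rfloor$ (for $2l+1\in[n]$) and $b_{2l}=a_{2l}+\lfloor\frac{n+1}{2}\rfloor$ (for $2l\in[n]$) is a good sequence; (3) if $a_{2l+1}\le \lfloor \frac{n+1}{2}\rfloor$ for all $l$ with $2l+1\in[n]$, then the sequence $b$ defined by $b_{2l+1}=a_{2l+1}+\lfloor \frac n2\rfloor$ (for $2l+1\in[n]$) and $b_{2l}=a_{2l}-\lfloor\frac{n+1}{2}\rfloor$ (for $2l\in[n]$) is a good sequence.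
   Context: $[n]=\{1,2,\dots,n\}$. A permutation $a=(a_1,\dots,a_n)$ of $[n]$ is a good sequence if the differences $|a_2-a_1|,\dots,|a_n-a_{n-1}|$ are pairwise distinct and one of the following holds: (i) $a_{2l+1}\ge\lceil\frac{n+1}{2}\rceil$ and $a_{2l}<\lceil\frac{n+1}{2}\rceil$ whenever the indices $2l+1,2l$ lie in $[n]$; or (ii) $a_{2l+1}\le\lfloor\frac{n+1}{2}\rfloor$ and $a_{2l}>\lfloor\frac{n+1}{2}\rfloor$ whenever the indices $2l+1,2l$ lie in $[n]$. (Here $l\ge 0$ is an integer, so odd positions include position $1$.) *)

theory Defs
  imports Main
begin

text \<open>A sequence (a_1,...,a_n) is represented by a function a :: nat => nat, of
  which only the values on the indices 1..n matter.\<close>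

definition is_perm :: "nat \<Rightarrow> (nat \<Rightarrow> nat) \<Rightarrow> bool" where
  "is_perm n a \<longleftrightarrow> bij_betw a {1..n} {1..n}"

definition distinct_diffs :: "nat \<Rightarrow> (nat \<Rightarrow> nat) \<Rightarrow> bool" where
  "distinct_diffs n a \<longleftrightarrow>
     inj_on (\<lambda>i. \<bar>int (a (i + 1)) - int (a i)\<bar>) {1..<n}"

text \<open>ceil((n+1)/2) = (n+2) div 2,  floor((n+1)/2) = (n+1) div 2.\<close>

definition cond_i :: "nat \<Rightarrow> (nat \<Rightarrow> nat) \<Rightarrow> bool" where
  "cond_i n a \<longleftrightarrow> (\<forall>i\<in>{1..n}.
      (odd i \<longrightarrow> a i \<ge> (n + 2) div 2) \<and> (even i \<longrightarrow> a i < (n + 2) div 2))"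

definition cond_ii :: "nat \<Rightarrow> (nat \<Rightarrow> nat) \<Rightarrow> bool" where
  "cond_ii n a \<longleftrightarrow> (\<forall>i\<in>{1..n}.
      (odd i \<longrightarrow> a i \<le> (n + 1) div 2) \<and> (even i \<longrightarrow> a i > (n + 1) div 2))"

definition good_seq :: "nat \<Rightarrow> (nat \<Rightarrow> nat) \<Rightarrow> bool" where
  "good_seq n a \<longleftrightarrow> is_perm n a \<and> distinct_diffs n a \<and> (cond_i n a \<or> cond_ii n a)"

end

theory Submission
  imports Defs
begin

lemma perm_range: "is_perm n a \<Longrightarrow> i \<in> {1..n} \<Longrightarrow> a i \<in> {1..n}"
  unfolding is_perm_def bij_betw_def by blast

lemma perm_inj: "is_perm n a \<Longrightarrow> inj_on a {1..n}"
  unfolding is_perm_def bij_betw_def by blast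

lemma mk_perm:
  assumes "inj_on b {1..n}" "\<And>i. i \<in> {1..n} \<Longrightarrow> b i \<in> {1..n}"
  shows "is_perm n b"
  unfolding is_perm_def bij_betw_def
proof -
  have "b ` {1..n} \<subseteq> {1..n}" using assms(2) by blast
  then have "b ` {1..n} = {1..n}" using endo_inj_surj[of "{1..n}" b] assms(1) by blast
  then show "inj_on b {1..n} \<and> b ` {1..n} = {1..n}" using assms(1) by blast
qed

lemma dd_transfer:
  assumes "distinct_diffs n a"
    and "\<And>i. i \<in> {1..<n} \<Longrightarrow> \<bar>int (b (i + 1)) - int (b i)\<bar> = g \<bar>int (a (i + 1)) - int (a i)\<bar>"
    and "inj g"
  shows "distinct_diffs n b"
  unfolding distinct_diffs_def
proof (rule inj_onI)
  fix x y assume x: "x \<in> {1..<n}" and y: "y \<in> {1..<n}"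
    and e: "\<bar>int (b (x + 1)) - int (b x)\<bar> = \<bar>int (b (y + 1)) - int (b y)\<bar>"
  then have "g \<bar>int (a (x + 1)) - int (a x)\<bar> = g \<bar>int (a (y + 1)) - int (a y)\<bar>"
    using assms(2)[OF x] assms(2)[OF y] e by simp
  then have "\<bar>int (a (x + 1)) - int (a x)\<bar> = \<bar>int (a (y + 1)) - int (a y)\<bar>"
    using assms(3) by (simp add: inj_eq)
  then show "x = y" using assms(1) x y unfolding distinct_diffs_def inj_on_def by blast
qed

lemma part1:
  assumes "good_seq n a"
  shows "good_seq n (\<lambda>i. n + 1 - a i)"
proof -
  have P: "is_perm n a" and D: "distinct_diffs n a" and C: "cond_i n a \<or> cond_ii n a"
    using assms unfolding good_seq_def by auto
  have R: "\<And>i. i \<in> {1..n} \<Longrightarrow> a i \<in> {1..n}" using perm_range[OF P] .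
  have I: "inj_on a {1..n}" using perm_inj[OF P] .
  have "is_perm n (\<lambda>i. n + 1 - a i)"
  proof (rule mk_perm)
    show "inj_on (\<lambda>i. n + 1 - a i) {1..n}"
    proof (rule inj_onI)
      fix x y assume "x \<in> {1..n}" "y \<in> {1..n}" "n + 1 - a x = n + 1 - a y"
      then have "a x = a y" using R[of x] R[of y] \<open>x \<in> {1..n}\<close> \<open>y \<in> {1..n}\<close> by auto
      then show "x = y" using I \<open>x \<in> {1..n}\<close> \<open>y \<in> {1..n}\<close> unfolding inj_on_def by blast
    qed
    show "\<And>i. i \<in> {1..n} \<Longrightarrow> n + 1 - a i \<in> {1..n}" using R by fastforce
  qed
  moreover have "distinct_diffs n (\<lambda>i. n + 1 - a i)"
  proof (rule dd_transfer[OF D, where g = id])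
    fix i assume i: "i \<in> {1..<n}"
    have "a i \<le> n" "a (i+1) \<le> n" using R[of i] R[of "i+1"] i by auto
    then show "\<bar>int (n + 1 - a (i + 1)) - int (n + 1 - a i)\<bar> = id \<bar>int (a (i + 1)) - int (a i)\<bar>"
      by (simp add: of_nat_diff)
  qed simp
  moreover have "cond_i n (\<lambda>i. n + 1 - a i) \<or> cond_ii n (\<lambda>i. n + 1 - a i)"
  proof (rule disjE[OF C])
    assume c: "cond_i n a"
    show ?thesis
    proof (rule disjI2, unfold cond_ii_def, intro ballI conjI impI)
      fix i assume i: "i \<in> {1..n}"
      { assume "odd i" then have "a i \<ge> (n+2) div 2" using c i unfolding cond_i_def by blast
        then show "n + 1 - a i \<le> (n + 1) div 2" by linarith }
      { assume "even i" then have "a i < (n+2) div 2" using c i unfolding cond_i_def by blast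
        then show "n + 1 - a i > (n + 1) div 2" by linarith }
    qed
  next
    assume c: "cond_ii n a"
    show ?thesis
    proof (rule disjI1, unfold cond_i_def, intro ballI conjI impI)
      fix i assume i: "i \<in> {1..n}"
      have "a i \<le> n" using R i by auto
      { assume "odd i" then have "a i \<le> (n+1) div 2" using c i unfolding cond_ii_def by blast
        then show "n + 1 - a i \<ge> (n + 2) div 2" using \<open>a i \<le> n\<close> by linarith }
      { assume "even i" then have "a i > (n+1) div 2" using c i unfolding cond_ii_def by blast
        then show "n + 1 - a i < (n + 2) div 2" using \<open>a i \<le> n\<close> by linarith }
    qed
  qed
  ultimately show ?thesis unfolding good_seq_def by blast
qed

lemma odd_of: "(n+2) div 2 \<le> (n+1) div (2::nat) \<Longrightarrow> odd n" by presburger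
lemma ge3: "odd (n::nat) \<Longrightarrow> n \<noteq> 1 \<Longrightarrow> n \<ge> 3" by presburger

lemma arith_facts: "(n+1) div 2 + n div 2 = (n::nat)" "(n+2) div 2 = n div 2 + 1"
  by auto

lemma get_cond_i:
  assumes g: "good_seq n a" and n: "n \<ge> 1"
    and pr: "\<forall>i\<in>{1..n}. odd i \<longrightarrow> a i \<ge> (n + 2) div 2"
  shows "cond_i n a"
proof -
  have P: "is_perm n a" and C: "cond_i n a \<or> cond_ii n a"
    using g unfolding good_seq_def by auto
  have R: "\<And>i. i \<in> {1..n} \<Longrightarrow> a i \<in> {1..n}" using perm_range[OF P] .
  have I: "inj_on a {1..n}" using perm_inj[OF P] .
  show ?thesis
  proof (rule disjE[OF C])
    assume c: "cond_ii n a"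
    have "n = 1"
    proof (rule ccontr)
      assume "n \<noteq> 1"
      have a1: "a 1 \<ge> (n+2) div 2" "a 1 \<le> (n+1) div 2" using pr c n unfolding cond_ii_def by auto
      then have "odd n" using odd_of by (meson order.trans)
      then have "n \<ge> 3" using \<open>n \<noteq> 1\<close> ge3 by blast
      then have a3: "a 3 \<ge> (n+2) div 2" "a 3 \<le> (n+1) div 2" using pr c unfolding cond_ii_def by auto
      have "a 1 = a 3" using a1 a3 by linarith
      moreover have "(1::nat) \<in> {1..n}" "(3::nat) \<in> {1..n}" using \<open>n \<ge> 3\<close> by auto
      ultimately show False using I unfolding inj_on_def by (metis numeral_One numeral_eq_iff semiring_norm(86))
    qed
    then show ?thesis using R unfolding cond_i_def by auto
  qed
qed

lemma get_cond_ii: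
  assumes g: "good_seq n a" and n: "n \<ge> 1"
    and pr: "\<forall>i\<in>{1..n}. odd i \<longrightarrow> a i \<le> (n + 1) div 2"
  shows "cond_ii n a"
proof -
  have P: "is_perm n a" and C: "cond_i n a \<or> cond_ii n a"
    using g unfolding good_seq_def by auto
  have R: "\<And>i. i \<in> {1..n} \<Longrightarrow> a i \<in> {1..n}" using perm_range[OF P] .
  have I: "inj_on a {1..n}" using perm_inj[OF P] .
  show ?thesis
  proof (rule disjE[OF C])
    assume c: "cond_i n a"
    have "n = 1"
    proof (rule ccontr)
      assume "n \<noteq> 1"
      have a1: "a 1 \<ge> (n+2) div 2" "a 1 \<le> (n+1) div 2" using pr c n unfolding cond_i_def by auto
      then have "odd n" using odd_of by (meson order.trans)
      then have "n \<ge> 3" using \<open>n \<noteq> 1\<close> ge3 by blast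
      then have a3: "a 3 \<ge> (n+2) div 2" "a 3 \<le> (n+1) div 2" using pr c unfolding cond_i_def by auto
      have "a 1 = a 3" using a1 a3 by linarith
      moreover have "(1::nat) \<in> {1..n}" "(3::nat) \<in> {1..n}" using \<open>n \<ge> 3\<close> by auto
      ultimately show False using I unfolding inj_on_def by (metis numeral_One numeral_eq_iff semiring_norm(86))
    qed
    then show ?thesis using R unfolding cond_ii_def by auto
  qed
qed

lemma part2:
  assumes g: "good_seq n a" and c: "cond_i n a"
  shows "good_seq n (\<lambda>i. if odd i then a i - n div 2 else a i + (n + 1) div 2)"
    (is "good_seq n ?b")
proof -
  have P: "is_perm n a" and D: "distinct_diffs n a"
    using g unfolding good_seq_def by auto
  have R: "\<And>i. i \<in> {1..n} \<Longrightarrow> a i \<in> {1..n}" using perm_range[OF P] .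
  have I: "inj_on a {1..n}" using perm_inj[OF P] .
  have A: "(n+1) div 2 + n div 2 = n" "(n+2) div 2 = n div 2 + 1" by (rule arith_facts)+
  have Bo: "1 \<le> ?b i \<and> ?b i \<le> (n+1) div 2 \<and> ?b i = a i - n div 2 \<and> a i \<ge> n div 2 + 1 \<and> a i \<le> n"
    if "i \<in> {1..n}" "odd i" for i
  proof -
    have "a i \<ge> (n+2) div 2" "a i \<le> n" using c that R[OF that(1)] unfolding cond_i_def by auto
    then show ?thesis using that A by auto
  qed
  have Be: "(n+1) div 2 < ?b i \<and> ?b i \<le> n \<and> ?b i = a i + (n+1) div 2 \<and> a i \<ge> 1 \<and> a i \<le> n div 2"
    if "i \<in> {1..n}" "even i" for i
  proof -
    have "a i < (n+2) div 2" "a i \<ge> 1" using c that R[OF that(1)] unfolding cond_i_def by auto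
    then show ?thesis using that A by auto
  qed
  have "is_perm n ?b"
  proof (rule mk_perm)
    show "inj_on ?b {1..n}"
    proof (rule inj_onI)
      fix x y assume x: "x \<in> {1..n}" and y: "y \<in> {1..n}" and e: "?b x = ?b y"
      have "a x = a y"
      proof (cases "odd x"; cases "odd y")
        assume "odd x" "odd y" then show ?thesis using Bo[OF x] Bo[OF y] e by linarith
      next
        assume "odd x" "\<not> odd y" then show ?thesis using Bo[OF x] Be[OF y] e by linarith
      next
        assume "\<not> odd x" "odd y" then show ?thesis using Be[OF x] Bo[OF y] e by linarith
      next
        assume "\<not> odd x" "\<not> odd y" then show ?thesis using Be[OF x] Be[OF y] e by linarith
      qed
      then show "x = y" using I x y unfolding inj_on_def by blast
    qed
    fix i assume i: "i \<in> {1..n}"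
    show "?b i \<in> {1..n}"
    proof (cases "odd i")
      case True then show ?thesis using Bo[OF i] A by auto
    next
      case False then show ?thesis using Be[OF i] by auto
    qed
  qed
  moreover have "distinct_diffs n ?b"
  proof (rule dd_transfer[OF D, where g = "\<lambda>d. int n - d"])
    fix i assume i: "i \<in> {1..<n}"
    have i1: "i \<in> {1..n}" and i2: "i + 1 \<in> {1..n}" using i by auto
    show "\<bar>int (?b (i + 1)) - int (?b i)\<bar> = int n - \<bar>int (a (i + 1)) - int (a i)\<bar>"
    proof (cases "odd i")
      case True
      then have "even (i+1)" by simp
      then show ?thesis using Bo[OF i1 True] Be[OF i2] A by (auto simp: of_nat_diff)
    next
      case False
      then have "odd (i+1)" by simp
      then show ?thesis using Be[OF i1] Bo[OF i2] False A by (auto simp: of_nat_diff)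
    qed
  next
    show "inj (\<lambda>d. int n - d)" by (rule injI) simp
  qed
  moreover have "cond_ii n ?b"
    unfolding cond_ii_def using Bo Be by auto
  ultimately show ?thesis unfolding good_seq_def by blast
qed

lemma part3:
  assumes g: "good_seq n a" and c: "cond_ii n a"
  shows "good_seq n (\<lambda>i. if odd i then a i + n div 2 else a i - (n + 1) div 2)"
    (is "good_seq n ?b")
proof -
  have P: "is_perm n a" and D: "distinct_diffs n a"
    using g unfolding good_seq_def by auto
  have R: "\<And>i. i \<in> {1..n} \<Longrightarrow> a i \<in> {1..n}" using perm_range[OF P] .
  have I: "inj_on a {1..n}" using perm_inj[OF P] .
  have A: "(n+1) div 2 + n div 2 = n" "(n+2) div 2 = n div 2 + 1" by (rule arith_facts)+
  have Bo: "(n+2) div 2 \<le> ?b i \<and> ?b i \<le> n \<and> ?b i = a i + n div 2 \<and> a i \<ge> 1 \<and> a i \<le> (n+1) div 2"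
    if "i \<in> {1..n}" "odd i" for i
  proof -
    have "a i \<le> (n+1) div 2" "a i \<ge> 1" using c that R[OF that(1)] unfolding cond_ii_def by auto
    then show ?thesis using that A by auto
  qed
  have Be: "1 \<le> ?b i \<and> ?b i \<le> n div 2 \<and> ?b i = a i - (n+1) div 2 \<and> a i > (n+1) div 2 \<and> a i \<le> n"
    if "i \<in> {1..n}" "even i" for i
  proof -
    have "a i > (n+1) div 2" "a i \<le> n" using c that R[OF that(1)] unfolding cond_ii_def by auto
    then show ?thesis using that A by auto
  qed
  have "is_perm n ?b"
  proof (rule mk_perm)
    show "inj_on ?b {1..n}"
    proof (rule inj_onI)
      fix x y assume x: "x \<in> {1..n}" and y: "y \<in> {1..n}" and e: "?b x = ?b y"
      have "a x = a y"
      proof (cases "odd x"; cases "odd y")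
        assume "odd x" "odd y" then show ?thesis using Bo[OF x] Bo[OF y] e by linarith
      next
        assume "odd x" "\<not> odd y" then show ?thesis using Bo[OF x] Be[OF y] e A by linarith
      next
        assume "\<not> odd x" "odd y" then show ?thesis using Be[OF x] Bo[OF y] e A by linarith
      next
        assume "\<not> odd x" "\<not> odd y" then show ?thesis using Be[OF x] Be[OF y] e by linarith
      qed
      then show "x = y" using I x y unfolding inj_on_def by blast
    qed
    fix i assume i: "i \<in> {1..n}"
    show "?b i \<in> {1..n}"
    proof (cases "odd i")
      case True then show ?thesis using Bo[OF i] A by auto
    next
      case False then show ?thesis using Be[OF i] by auto
    qed
  qed
  moreover have "distinct_diffs n ?b"
  proof (rule dd_transfer[OF D, where g = "\<lambda>d. int n - d"])
    fix i assume i: "i \<in> {1..<n}"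
    have i1: "i \<in> {1..n}" and i2: "i + 1 \<in> {1..n}" using i by auto
    show "\<bar>int (?b (i + 1)) - int (?b i)\<bar> = int n - \<bar>int (a (i + 1)) - int (a i)\<bar>"
    proof (cases "odd i")
      case True
      then have "even (i+1)" by simp
      then show ?thesis using Bo[OF i1 True] Be[OF i2] A by (auto simp: of_nat_diff)
    next
      case False
      then have "odd (i+1)" by simp
      then show ?thesis using Be[OF i1] Bo[OF i2] False A by (auto simp: of_nat_diff)
    qed
  next
    show "inj (\<lambda>d. int n - d)" by (rule injI) simp
  qed
  moreover have "cond_i n ?b"
    unfolding cond_i_def
  proof (intro ballI conjI impI)
    fix i assume i: "i \<in> {1..n}"
    { assume "odd i" then show "?b i \<ge> (n + 2) div 2" using Bo[OF i] by blast }
    { assume e: "even i" have "?b i \<le> n div 2" using Be[OF i e] by blast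
      then show "?b i < (n + 2) div 2" using A(2) by linarith }
  qed
  ultimately show ?thesis unfolding good_seq_def by blast
qed

theorem lemma1:
  fixes n :: nat and a :: "nat \<Rightarrow> nat"
  assumes "n \<ge> 1" and "good_seq n a"
  shows "good_seq n (\<lambda>i. n + 1 - a i)
    \<and> ((\<forall>i\<in>{1..n}. odd i \<longrightarrow> a i \<ge> (n + 2) div 2) \<longrightarrow>
         good_seq n (\<lambda>i. if odd i then a i - n div 2 else a i + (n + 1) div 2))
    \<and> ((\<forall>i\<in>{1..n}. odd i \<longrightarrow> a i \<le> (n + 1) div 2) \<longrightarrow>
         good_seq n (\<lambda>i. if odd i then a i + n div 2 else a i - (n + 1) div 2))"
  using part1[OF assms(2)] part2[OF assms(2) get_cond_i[OF assms(2) assms(1)]]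
    part3[OF assms(2) get_cond_ii[OF assms(2) assms(1)]] by blast

end
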